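(* Let $f\in\mathbb{K}_C[[\underline{x}]][y]$ be a free polynomial of degree $n$ with characteristic exponents $m_1<\dots<m_h$, and let $r_0^1,\dots,r_0^e,r_1,\dots,r_h$ and $e_1,\dots,e_h$ be as in the context. Let $\underline{\alpha}=(\alpha_0^1,\dots,\alpha_0^e,\alpha_1,\dots,\alpha_h)$ and $\underline{\beta}=(\beta_0^1,\dots,\beta_0^e,\beta_1,\dots,\beta_h)$ be elements of $\mathbb{Z}^e\times\mathbb{N}^h$ with $0\le\alpha_i,\beta_i<e_i$ for all $i\in\{1,\dots,h\}$. If $\sum_{i=1}^e\alpha_0^ir_0^i+\sum_{j=1}^h\alpha_jr_j=\sum_{i=1}^e\beta_0^ir_0^i+\sum_{j=1}^h\beta_jr_j$, then $\underline{\alpha}=\underline{\beta}$.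
   Context: $\mathbb{K}$ is an algebraically closed field of characteristic $0$, $\underline{x}=(x_1,\dots,x_e)$. $C\subseteq\mathbb{R}^e$ is a line free cone (nonnegative real combinations of finitely many vectors of $\mathbb{Q}^e$, with $v\in C\setminus\{0\}\Rightarrow -v\notin C$). $\mathbb{K}_C[[\underline{x}]]$ is the ring of formal series with exponents in $C\cap\mathbb{Z}^e$; $\mathbb{K}_C[[\underline{x}^{1/N}]]$ the ring of series $\sum a_p\underline{x}^{p/N}$, $p\in\mathbb{Z}^e$, $p/N\in C$. Fix a total additive order $\le$ on $\mathbb{Z}^e$ compatible with $C$, extended to $\mathbb{Q}^e$ by clearing denominators; $O(z)$ is the $\le$-least exponent of a nonzero series $z$. A monic $g\in\mathbb{K}_C[[\underline{x}]][y]$ of degree $N$ is free if irreducible in $\mathbb{K}_C[[\underline{x}]][y]$ with a root in $\mathbb{K}_C[[\underline{x}^{1/N}]]$. The roots $y_1,\dots,y_n$ of $f$ lie in $\mathbb{K}_C[[\underline{x}^{1/n}]]$; characteristic exponents are the $m\in\mathbb{Z}^e$ with $m/n=O(y_i-y_j)$ for some $y_i\ne y_j$. Sequences: $D_1=n^e$, $D_{i+1}$ the gcd of the $e\times e$ minors of $(nI_e,m_1^T,\dots,m_i^T)$ ($1\le i\le h$); $e_i=D_i/D_{i+1}$; $r_0^k=n\varepsilon_k$ where $\varepsilon_1,\dots,\varepsilon_e$ is the standard basis of $\mathbb{Z}^e$; $r_1=m_1$, $r_i=e_{i-1}r_{i-1}+m_i-m_{i-1}$ ($2\le i\le h$). 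*)

theory Defs
  imports "HOL-Analysis.Analysis" "HOL-Computational_Algebra.Polynomial"
begin

text \<open>A cone is given by a finite set V of generators with rational coordinates in R^e;
 C = nonnegative real combinations of V.\<close>

definition in_cone :: "(real^'e::finite) set \<Rightarrow> real^'e \<Rightarrow> bool" where
  "in_cone V x \<longleftrightarrow> (\<exists>c. (\<forall>v\<in>V. c v \<ge> 0) \<and> x = (\<Sum>v\<in>V. c v *\<^sub>R v))"

definition rational_cone :: "(real^'e::finite) set \<Rightarrow> bool" where
  "rational_cone V \<longleftrightarrow> finite V \<and> (\<forall>v\<in>V. \<forall>i. v $ i \<in> \<rat>)"

definition line_free :: "(real^'e::finite) set \<Rightarrow> bool" where
  "line_free V \<longleftrightarrow> (\<forall>v. in_cone V v \<and> v \<noteq> 0 \<longrightarrow> \<not> in_cone V (- v))"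

definition realvec :: "nat \<Rightarrow> int^'e \<Rightarrow> real^'e" where
  "realvec N p = (\<chi> i. real_of_int (p $ i) / real N)"

text \<open>A series  sum a_p x^(p/N)  is represented by its coefficient function a on Z^e
 (the denominator N being fixed by the ring under consideration).\<close>

type_synonym ('k,'e) ser = "int^'e \<Rightarrow> 'k"

text \<open>membership in K_C[[x^(1/N)]]\<close>
definition ser_in :: "(real^'e::finite) set \<Rightarrow> nat \<Rightarrow> ('k::zero,'e::finite) ser \<Rightarrow> bool" where
  "ser_in V N a \<longleftrightarrow> (\<forall>p. a p \<noteq> 0 \<longrightarrow> in_cone V (realvec N p))"

definition ser_zero :: "('k::zero,'e::finite) ser" where
  "ser_zero = (\<lambda>p. 0)"

definition ser_one :: "('k::{zero,one},'e::finite) ser" where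
  "ser_one = (\<lambda>p. if p = 0 then 1 else 0)"

definition ser_mult :: "('k::comm_ring_1,'e::finite) ser \<Rightarrow> ('k,'e) ser \<Rightarrow> ('k,'e) ser" where
  "ser_mult a b = (\<lambda>p. \<Sum>(q,r)\<in>{(q,r). q + r = p \<and> a q \<noteq> 0 \<and> b r \<noteq> 0}. a q * b r)"

definition ser_pow :: "('k::comm_ring_1,'e::finite) ser \<Rightarrow> nat \<Rightarrow> ('k,'e) ser" where
  "ser_pow z k = ((ser_mult z) ^^ k) ser_one"

text \<open>embedding K_C[[x]] into K_C[[x^(1/N)]]: x^p = x^((N p)/N)\<close>
definition ser_embed :: "nat \<Rightarrow> ('k::zero,'e::finite) ser \<Rightarrow> ('k,'e) ser" where
  "ser_embed N a = (\<lambda>p. if (\<forall>i. int N dvd p $ i) then a (\<chi> i. p $ i div int N) else 0)"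

text \<open>a polynomial is its coefficient sequence (coefficient of y^k)\<close>
type_synonym ('k,'e) spoly = "nat \<Rightarrow> ('k,'e) ser"

definition spoly_in :: "(real^'e::finite) set \<Rightarrow> ('k::zero,'e::finite) spoly \<Rightarrow> bool" where
  "spoly_in V P \<longleftrightarrow> (\<forall>k. ser_in V 1 (P k)) \<and> finite {k. P k \<noteq> ser_zero}"

definition spoly_zero :: "('k::zero,'e::finite) spoly" where
  "spoly_zero = (\<lambda>k. ser_zero)"

definition spoly_one :: "('k::{zero,one},'e::finite) spoly" where
  "spoly_one = (\<lambda>k. if k = 0 then ser_one else ser_zero)"

definition spoly_mult :: "('k::comm_ring_1,'e::finite) spoly \<Rightarrow> ('k,'e) spoly \<Rightarrow> ('k,'e) spoly" where
  "spoly_mult P Q = (\<lambda>k p. \<Sum>i\<le>k. ser_mult (P i) (Q (k - i)) p)"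

definition spoly_unit :: "(real^'e::finite) set \<Rightarrow> ('k::comm_ring_1,'e::finite) spoly \<Rightarrow> bool" where
  "spoly_unit V P \<longleftrightarrow> (\<exists>Q. spoly_in V Q \<and> spoly_mult P Q = spoly_one)"

definition spoly_irreducible :: "(real^'e::finite) set \<Rightarrow> ('k::comm_ring_1,'e::finite) spoly \<Rightarrow> bool" where
  "spoly_irreducible V f \<longleftrightarrow> spoly_in V f \<and> f \<noteq> spoly_zero \<and> \<not> spoly_unit V f \<and>
     (\<forall>g h. spoly_in V g \<and> spoly_in V h \<and> f = spoly_mult g h \<longrightarrow> spoly_unit V g \<or> spoly_unit V h)"

definition spoly_monic :: "nat \<Rightarrow> ('k::{zero,one},'e::finite) spoly \<Rightarrow> bool" where
  "spoly_monic N f \<longleftrightarrow> f N = ser_one \<and> (\<forall>k>N. f k = ser_zero)"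

text \<open>value f(z) for z in K_C[[x^(1/N)]], f of degree at most d\<close>
definition spoly_eval :: "nat \<Rightarrow> nat \<Rightarrow> ('k::comm_ring_1,'e::finite) spoly \<Rightarrow> ('k,'e) ser \<Rightarrow> ('k,'e) ser" where
  "spoly_eval N d f z = (\<lambda>p. \<Sum>k\<le>d. ser_mult (ser_embed N (f k)) (ser_pow z k) p)"

definition free_poly :: "(real^'e::finite) set \<Rightarrow> nat \<Rightarrow> ('k::comm_ring_1,'e::finite) spoly \<Rightarrow> bool" where
  "free_poly V N f \<longleftrightarrow> spoly_monic N f \<and> spoly_irreducible V f \<and>
     (\<exists>z. ser_in V N z \<and> spoly_eval N N f z = ser_zero)"

definition roots_of :: "(real^'e::finite) set \<Rightarrow> nat \<Rightarrow> ('k::comm_ring_1,'e::finite) spoly \<Rightarrow> ('k,'e) ser set" where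
  "roots_of V n f = {z. ser_in V n z \<and> spoly_eval n n f z = ser_zero}"

definition additive_total_order :: "(int^'e::finite \<Rightarrow> int^'e \<Rightarrow> bool) \<Rightarrow> bool" where
  "additive_total_order le \<longleftrightarrow> (\<forall>a. le a a) \<and> (\<forall>a b. le a b \<and> le b a \<longrightarrow> a = b) \<and>
     (\<forall>a b c. le a b \<and> le b c \<longrightarrow> le a c) \<and> (\<forall>a b. le a b \<or> le b a) \<and>
     (\<forall>a b c. le a b \<longrightarrow> le (a + c) (b + c))"

definition compatible_order :: "(real^'e::finite) set \<Rightarrow> (int^'e::finite \<Rightarrow> int^'e \<Rightarrow> bool) \<Rightarrow> bool" where
  "compatible_order V le \<longleftrightarrow> (\<forall>p. in_cone V (realvec 1 p) \<longrightarrow> le 0 p)"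

definition is_least_wrt :: "(int^'e::finite \<Rightarrow> int^'e \<Rightarrow> bool) \<Rightarrow> (int^'e) set \<Rightarrow> int^'e \<Rightarrow> bool" where
  "is_least_wrt le S p \<longleftrightarrow> p \<in> S \<and> (\<forall>q\<in>S. le p q)"

text \<open>characteristic exponents: m with m/n = O(y_i - y_j). For a series in K_C[[x^(1/n)]] written
 as sum a_p x^(p/n), O = p0/n where p0 is the le-least p with a_p \<noteq> 0 (clearing denominators),
 so m = p0.\<close>
definition char_exps :: "(real^'e::finite) set \<Rightarrow> (int^'e::finite \<Rightarrow> int^'e \<Rightarrow> bool) \<Rightarrow> nat \<Rightarrow> ('k::comm_ring_1,'e::finite) spoly \<Rightarrow> (int^'e) set" where
  "char_exps V le n f = {m. \<exists>y y'. y \<in> roots_of V n f \<and> y' \<in> roots_of V n f \<and> y \<noteq> y' \<and>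
       is_least_wrt le {p. y p - y' p \<noteq> 0} m}"

text \<open>columns of the e x (e+i) matrix (n I_e, m_1^T, ..., m_i^T)\<close>
definition colv :: "nat \<Rightarrow> (nat \<Rightarrow> int^'e::finite) \<Rightarrow> 'e + nat \<Rightarrow> int^'e" where
  "colv n m c = (case c of Inl k \<Rightarrow> int n *s axis k 1 | Inr j \<Rightarrow> m j)"

text \<open>the set of e x e minors of (n I_e, m_1^T, ..., m_i^T): choose e distinct columns\<close>
definition minors :: "nat \<Rightarrow> (nat \<Rightarrow> int^'e::finite) \<Rightarrow> nat \<Rightarrow> int set" where
  "minors n m i = {det (\<chi> r c. colv n m (\<sigma> c) $ r :: int^'e^'e) | \<sigma>.
       inj \<sigma> \<and> range \<sigma> \<subseteq> range Inl \<union> Inr ` {1..i}}"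

definition Dseq :: "nat \<Rightarrow> (nat \<Rightarrow> int^'e::finite) \<Rightarrow> nat \<Rightarrow> int" where
  "Dseq n m i = (if i \<le> 1 then int n ^ CARD('e) else Gcd (minors n m (i - 1)))"

definition eseq :: "nat \<Rightarrow> (nat \<Rightarrow> int^'e::finite) \<Rightarrow> nat \<Rightarrow> int" where
  "eseq n m i = Dseq n m i div Dseq n m (Suc i)"

fun rseq :: "nat \<Rightarrow> (nat \<Rightarrow> int^'e::finite) \<Rightarrow> nat \<Rightarrow> int^'e" where
  "rseq n m 0 = 0"
| "rseq n m (Suc 0) = m 1"
| "rseq n m (Suc (Suc i)) = eseq n m (Suc i) *s rseq n m (Suc i) + m (Suc (Suc i)) - m (Suc i)"

definition r0 :: "nat \<Rightarrow> 'e::finite \<Rightarrow> int^'e" where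
  "r0 n k = int n *s axis k 1"

definition alg_closed_type :: "'k::field itself \<Rightarrow> bool" where
  "alg_closed_type _ \<longleftrightarrow> (\<forall>p::'k poly. degree p \<ge> 1 \<longrightarrow> (\<exists>x. poly p x = 0))"

end

theory Submission imports Defs begin

definition Lab :: "nat \<Rightarrow> ('e + nat) set" where
  "Lab i = range Inl \<union> Inr ` {1..i}"

inductive_set Lspan :: "nat \<Rightarrow> (nat \<Rightarrow> int^'e::finite) \<Rightarrow> nat \<Rightarrow> (int^'e) set"
  for n m i where
  gen: "l \<in> Lab i \<Longrightarrow> colv n m l \<in> Lspan n m i"
| add: "x \<in> Lspan n m i \<Longrightarrow> y \<in> Lspan n m i \<Longrightarrow> x + y \<in> Lspan n m i"
| smul: "x \<in> Lspan n m i \<Longrightarrow> c *s x \<in> Lspan n m i"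

lemma smul_diff: "(a - b) *s (x::int^'e::finite) = a *s x - b *s x"
  by (simp add: vec_eq_iff left_diff_distrib)

lemma L_zero: "0 \<in> Lspan n m i"
proof -
  have "0 *s colv n m (Inl undefined) \<in> Lspan n m i" by (intro Lspan.smul Lspan.gen) (simp add: Lab_def)
  then show ?thesis by simp
qed

lemma L_neg: "x \<in> Lspan n m i \<Longrightarrow> - x \<in> Lspan n m i"
proof -
  assume "x \<in> Lspan n m i"
  then have "(-1) *s x \<in> Lspan n m i" by (rule Lspan.smul)
  moreover have "(-1) *s x = - x" by (simp add: vec_eq_iff)
  ultimately show ?thesis by simp
qed

lemma L_diff: "x \<in> Lspan n m i \<Longrightarrow> y \<in> Lspan n m i \<Longrightarrow> x - y \<in> Lspan n m i"
  using Lspan.add[OF _ L_neg] by (metis diff_conv_add_uminus)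

lemma L_sum: "finite S \<Longrightarrow> (\<And>s. s \<in> S \<Longrightarrow> f s \<in> Lspan n m i) \<Longrightarrow> sum f S \<in> Lspan n m i"
  by (induction S rule: finite_induct) (auto intro: L_zero Lspan.add)

lemma Lab_mono: "i \<le> i' \<Longrightarrow> Lab i \<subseteq> Lab i'"
  by (auto simp: Lab_def)

lemma L_mono: "x \<in> Lspan n m i \<Longrightarrow> i \<le> i' \<Longrightarrow> x \<in> Lspan n m i'"
  by (induction x rule: Lspan.induct) (auto intro: Lspan.intros dest: Lab_mono)

lemma m_in: "1 \<le> j \<Longrightarrow> j \<le> i \<Longrightarrow> m j \<in> Lspan n m i"
proof -
  assume "1 \<le> j" "j \<le> i"
  then have "colv n m (Inr j) \<in> Lspan n m i" by (intro Lspan.gen) (auto simp: Lab_def)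
  then show ?thesis by (simp add: colv_def)
qed

lemma r_facts: "rseq n m (Suc i) - m (Suc i) \<in> Lspan n m i \<and> rseq n m (Suc i) \<in> Lspan n m (Suc i)"
proof (induction i)
  case 0
  then show ?case by (auto intro: L_zero m_in)
next
  case (Suc i)
  have r: "rseq n m (Suc i) \<in> Lspan n m (Suc i)" using Suc by blast
  have d: "rseq n m (Suc (Suc i)) - m (Suc (Suc i)) = eseq n m (Suc i) *s rseq n m (Suc i) - m (Suc i)"
    by simp
  have 1: "rseq n m (Suc (Suc i)) - m (Suc (Suc i)) \<in> Lspan n m (Suc i)"
    unfolding d by (intro L_diff Lspan.smul r m_in) auto
  have "rseq n m (Suc (Suc i)) = (rseq n m (Suc (Suc i)) - m (Suc (Suc i))) + m (Suc (Suc i))" by simp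
  also have "\<dots> \<in> Lspan n m (Suc (Suc i))"
    by (intro Lspan.add L_mono[OF 1] m_in) auto
  finally show ?case using 1 by blast
qed

lemma r_in: "rseq n m i \<in> Lspan n m i"
  by (cases i) (auto simp: L_zero r_facts)

lemma r_diff: "1 \<le> i \<Longrightarrow> rseq n m i - m i \<in> Lspan n m (i - 1)"
  by (cases i) (auto simp: r_facts)

lemma H_noninj:
  assumes H: "\<And>\<sigma>. inj \<sigma> \<Longrightarrow> range \<sigma> \<subseteq> Lab i \<Longrightarrow> d dvd det (\<chi> c. colv n m (\<sigma> c) :: int^'e::finite^'e)"
    and r: "range \<tau> \<subseteq> Lab i"
  shows "d dvd det (\<chi> c. colv n m (\<tau> c) :: int^'e^'e)"
proof (cases "inj \<tau>")
  case True then show ?thesis using H r by blast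
next
  case False
  then obtain a b where ab: "a \<noteq> b" "\<tau> a = \<tau> b" unfolding inj_def by blast
  have "det (\<chi> c. colv n m (\<tau> c) :: int^'e^'e) = 0"
    by (rule det_identical_rows[OF ab(1)]) (simp add: row_def ab(2))
  then show ?thesis by simp
qed

lemma KL:
  assumes H: "\<And>\<tau>. range \<tau> \<subseteq> Lab i \<Longrightarrow> d dvd det (\<chi> c. colv n m (\<tau> c) :: int^'e::finite^'e)"
    and x: "x \<in> Lspan n m i"
  shows "range \<tau> \<subseteq> Lab i \<Longrightarrow> d dvd det (\<chi> c. if c = s then x else colv n m (\<tau> c) :: int^'e^'e)"
  using x
proof (induction x rule: Lspan.induct)
  case (gen l)
  have "(\<chi> c. if c = s then colv n m l else colv n m (\<tau> c) :: int^'e^'e) = (\<chi> c. colv n m ((\<tau>(s := l)) c))"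
    by (simp add: vec_eq_iff)
  moreover have "range (\<tau>(s := l)) \<subseteq> Lab i" using gen by auto
  ultimately show ?case using H by metis
next
  case (add x y)
  then show ?case using det_row_add[of s "\<lambda>_. x" "\<lambda>_. y" "\<lambda>c. colv n m (\<tau> c)"] by simp
next
  case (smul x c)
  then show ?case using det_row_mul[of s c "\<lambda>_. x" "\<lambda>c. colv n m (\<tau> c)"] by simp
qed

lemma det_smult_rows:
  "det (\<chi> i. c *s b i :: int^'n::finite^'n) = c ^ CARD('n) * det (\<chi> i. b i :: int^'n^'n)"
  unfolding det_def by (simp add: prod.distrib sum_distrib_left mult.left_commute)

lemma minor_eq: "det (\<chi> r c. colv n m (\<sigma> c) $ r :: int^'e::finite^'e) = det (\<chi> c. colv n m (\<sigma> c) :: int^'e^'e)"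
proof -
  have "(\<chi> r c. colv n m (\<sigma> c) $ r :: int^'e::finite^'e) = transpose (\<chi> c. colv n m (\<sigma> c))"
    by (simp add: transpose_def)
  then show ?thesis by simp
qed

lemma Dfacts:
  assumes j: "1 \<le> j" and inj: "inj \<sigma>" and r: "range \<sigma> \<subseteq> Lab (j - 1)"
  shows "Dseq n m j dvd det (\<chi> c. colv n m (\<sigma> c) :: int^'e::finite^'e)"
proof (cases "j = 1")
  case True
  have "\<forall>c. \<exists>k. \<sigma> c = Inl k" using r True by (auto simp: Lab_def)
  then obtain g where g: "\<And>c. \<sigma> c = Inl (g c)" by metis
  have "(\<chi> c. colv n m (\<sigma> c) :: int^'e^'e) = (\<chi> c. int n *s axis (g c) 1)"
    by (simp add: g colv_def)
  then have "det (\<chi> c. colv n m (\<sigma> c) :: int^'e^'e) = int n ^ CARD('e) * det (\<chi> c. axis (g c) 1 :: int^'e^'e)"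
    by (simp add: det_smult_rows)
  then show ?thesis using True by (simp add: Dseq_def)
next
  case False
  then have "det (\<chi> r c. colv n m (\<sigma> c) $ r :: int^'e::finite^'e) \<in> minors n m (j - 1)"
    using inj r by (auto simp: minors_def Lab_def)
  then have "Gcd (minors n m (j - 1)) dvd det (\<chi> c. colv n m (\<sigma> c) :: int^'e::finite^'e)"
    using minor_eq by (metis Gcd_dvd)
  then show ?thesis using False j by (simp add: Dseq_def)
qed

lemma Dlemma:
  fixes m :: "nat \<Rightarrow> int^'e::finite"
  assumes j: "1 \<le> j" and K: "K *s m j \<in> Lspan n m (j - 1)"
  shows "Dseq n m j dvd K * Dseq n m (Suc j)"
proof -
  have H: "\<And>\<tau>. range \<tau> \<subseteq> Lab (j - 1) \<Longrightarrow> Dseq n m j dvd det (\<chi> c. colv n m (\<tau> c) :: int^'e^'e)"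
    by (rule H_noninj) (rule Dfacts[OF j])
  have "Dseq n m j dvd y" if y: "y \<in> (*) K ` minors n m j" for y
  proof -
    obtain \<sigma> where s: "inj \<sigma>" "range \<sigma> \<subseteq> range Inl \<union> Inr ` {1..j}"
      and yd: "y = K * det (\<chi> c. colv n m (\<sigma> c) :: int^'e^'e)"
      using y by (auto simp: minors_def minor_eq)
    show ?thesis
    proof (cases "Inr j \<in> range \<sigma>")
      case True
      then obtain s0 where s0: "\<sigma> s0 = Inr j" by auto
      define \<tau> where "\<tau> = \<sigma>(s0 := Inl undefined)"
      have rt: "range \<tau> \<subseteq> Lab (j - 1)"
      proof
        fix z assume "z \<in> range \<tau>"
        then obtain c where c: "z = \<tau> c" by auto
        show "z \<in> Lab (j - 1)"
        proof (cases "c = s0")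
          case True then show ?thesis using c by (simp add: \<tau>_def Lab_def)
        next
          case False
          then have "\<sigma> c \<noteq> Inr j" using s0 s(1) by (metis injD)
          moreover have "\<sigma> c \<in> range Inl \<union> Inr ` {1..j}" using s(2) by auto
          ultimately show ?thesis using c False by (auto simp: \<tau>_def Lab_def)
        qed
      qed
      have "(\<chi> c. colv n m (\<sigma> c) :: int^'e^'e) = (\<chi> c. if c = s0 then m j else colv n m (\<tau> c))"
        by (simp add: vec_eq_iff \<tau>_def s0 colv_def)
      then have "y = K * det (\<chi> c. if c = s0 then m j else colv n m (\<tau> c) :: int^'e^'e)"
        using yd by simp
      also have "\<dots> = det (\<chi> c. if c = s0 then K *s m j else colv n m (\<tau> c) :: int^'e^'e)"
        using det_row_mul[of s0 K "\<lambda>_. m j" "\<lambda>c. colv n m (\<tau> c)"] by simp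
      finally show ?thesis using KL[OF H K rt] by simp
    next
      case False
      have "\<sigma> c \<in> Lab (j - 1)" for c
      proof -
        have "\<sigma> c \<noteq> Inr j" using False by (metis rangeI)
        moreover have "\<sigma> c \<in> range Inl \<union> Inr ` {1..j}" using s(2) by auto
        ultimately show ?thesis by (auto simp: Lab_def)
      qed
      then have "range \<sigma> \<subseteq> Lab (j - 1)" by auto
      then show ?thesis using yd H by simp
    qed
  qed
  then have "Dseq n m j dvd Gcd ((*) K ` minors n m j)" by (rule Gcd_greatest)
  then show ?thesis using j by (simp add: Gcd_mult Dseq_def)
qed

lemma spoly_one_unit: "spoly_unit V (spoly_one :: ('k::comm_ring_1,'e::finite) spoly)"
proof -
  have in1: "spoly_in V (spoly_one :: ('k,'e) spoly)"
  proof -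
    have "in_cone V (realvec 1 (0::int^'e))"
      unfolding in_cone_def by (rule exI[of _ "\<lambda>_. 0"]) (simp add: realvec_def vec_eq_iff)
    then have "ser_in V 1 (spoly_one k :: ('k,'e) ser)" for k
      by (auto simp: ser_in_def spoly_one_def ser_one_def ser_zero_def)
    moreover have "{k. (spoly_one :: ('k,'e) spoly) k \<noteq> ser_zero} \<subseteq> {0}"
      by (auto simp: spoly_one_def)
    ultimately show ?thesis unfolding spoly_in_def by (meson finite.emptyI finite_insert finite_subset)
  qed
  have z1: "ser_mult ser_zero b = (ser_zero :: ('k,'e) ser)" for b
    by (simp add: ser_mult_def ser_zero_def fun_eq_iff)
  have z2: "ser_mult b ser_zero = (ser_zero :: ('k,'e) ser)" for b
    by (simp add: ser_mult_def ser_zero_def fun_eq_iff)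
  have oo: "ser_mult ser_one ser_one = (ser_one :: ('k,'e) ser)"
  proof (rule ext)
    fix p :: "int^'e"
    show "ser_mult ser_one ser_one p = (ser_one :: ('k,'e) ser) p"
    proof (cases "(1::'k) = 0")
      case True then show ?thesis by (simp add: ser_mult_def ser_one_def)
    next
      case False
      then have "{(q, r). q + r = p \<and> (ser_one q :: 'k) \<noteq> 0 \<and> (ser_one r :: 'k) \<noteq> 0} = (if p = 0 then {(0,0)} else {})"
        by (auto simp: ser_one_def)
      then show ?thesis by (simp add: ser_mult_def ser_one_def)
    qed
  qed
  have "spoly_mult spoly_one spoly_one = (spoly_one :: ('k,'e) spoly)"
  proof (rule ext)+
    fix k and p :: "int^'e"
    show "spoly_mult spoly_one spoly_one k p = (spoly_one :: ('k,'e) spoly) k p"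
    proof (cases k)
      case 0 then show ?thesis by (simp add: spoly_mult_def spoly_one_def oo)
    next
      case (Suc k')
      have "ser_mult (spoly_one i) (spoly_one (k - i)) p = (0::'k)" if "i \<le> k" for i
        using Suc by (cases "i = 0") (auto simp: spoly_one_def z1 z2, auto simp: ser_zero_def)
      then have "(\<Sum>i\<le>k. ser_mult (spoly_one i) (spoly_one (k - i)) p) = (0::'k)"
        by (intro sum.neutral) auto
      then show ?thesis using Suc unfolding spoly_mult_def by (simp add: spoly_one_def ser_zero_def)
    qed
  qed
  then show ?thesis using in1 unfolding spoly_unit_def by blast
qed

lemma n_pos: "free_poly V n (f :: ('k::comm_ring_1,'e::finite) spoly) \<Longrightarrow> n \<noteq> 0"
proof
  assume fp: "free_poly V n f" and n: "n = 0"
  then have "f = spoly_one"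
    by (auto simp: free_poly_def spoly_monic_def spoly_one_def fun_eq_iff)
  then show False using fp spoly_one_unit unfolding free_poly_def spoly_irreducible_def by blast
qed


theorem mainTheorem12:
  fixes V :: "(real^'e::finite) set"
    and le :: "int^'e \<Rightarrow> int^'e \<Rightarrow> bool"
    and f :: "('k::field_char_0,'e) spoly"
    and n h :: nat
    and m :: "nat \<Rightarrow> int^'e"
    and \<alpha>0 \<beta>0 :: "int^'e"
    and \<alpha> \<beta> :: "nat \<Rightarrow> nat"
  assumes "alg_closed_type TYPE('k)"
    and "rational_cone V" and "line_free V"
    and "additive_total_order le" and "compatible_order V le"
    and "free_poly V n f"
    and "char_exps V le n f = m ` {1..h}"
    and "\<forall>i. 1 \<le> i \<and> i < h \<longrightarrow> le (m i) (m (Suc i)) \<and> m i \<noteq> m (Suc i)"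
    and "\<forall>i\<in>{1..h}. int (\<alpha> i) < eseq n m i \<and> int (\<beta> i) < eseq n m i"
    and "(\<Sum>k\<in>UNIV. \<alpha>0 $ k *s r0 n k) + (\<Sum>j=1..h. int (\<alpha> j) *s rseq n m j)
       = (\<Sum>k\<in>UNIV. \<beta>0 $ k *s r0 n k) + (\<Sum>j=1..h. int (\<beta> j) *s rseq n m j)"
  shows "\<alpha>0 = \<beta>0 \<and> (\<forall>j\<in>{1..h}. \<alpha> j = \<beta> j)"
proof -
  note eq = assms(10)
  note ebound = assms(9)
  have n0: "n \<noteq> 0" using n_pos[OF assms(6)] .
  define A where "A = (\<Sum>k\<in>UNIV. \<alpha>0 $ k *s r0 n k)"
  define B where "B = (\<Sum>k\<in>UNIV. \<beta>0 $ k *s r0 n k)"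
  define \<delta> where "\<delta> i = int (\<alpha> i) - int (\<beta> i)" for i
  have r0L: "r0 n k \<in> Lspan n m i" for k i
  proof -
    have "colv n m (Inl k) \<in> Lspan n m i" by (rule Lspan.gen) (simp add: Lab_def)
    then show ?thesis by (simp add: colv_def r0_def)
  qed
  have ABL: "A - B \<in> Lspan n m i" for i
    unfolding A_def B_def by (intro L_diff L_sum Lspan.smul r0L) auto
  have eq0: "(A - B) + (\<Sum>i=1..h. \<delta> i *s rseq n m i) = 0"
  proof -
    have "(\<Sum>i=1..h. \<delta> i *s rseq n m i) = (\<Sum>j=1..h. int (\<alpha> j) *s rseq n m j) - (\<Sum>j=1..h. int (\<beta> j) *s rseq n m j)"
      by (simp add: \<delta>_def smul_diff sum_subtractf)
    then have "(A - B) + (\<Sum>i=1..h. \<delta> i *s rseq n m i) = (A + (\<Sum>j=1..h. int (\<alpha> j) *s rseq n m j)) - (B + (\<Sum>j=1..h. int (\<beta> j) *s rseq n m j))"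
      by (simp add: algebra_simps)
    also have "\<dots> = 0" using eq unfolding A_def B_def by simp
    finally show ?thesis .
  qed
  have allj: "\<forall>j\<in>{1..h}. \<alpha> j = \<beta> j"
  proof (rule ccontr)
    assume nt: "\<not> ?thesis"
    define S where "S = {j\<in>{1..h}. \<alpha> j \<noteq> \<beta> j}"
    have Sne: "S \<noteq> {}" "finite S" using nt by (auto simp: S_def)
    define J where "J = Max S"
    have JS: "J \<in> S" using Sne unfolding J_def by (rule Max_in[rotated])
    have J1: "1 \<le> J" "J \<le> h" "\<alpha> J \<noteq> \<beta> J" using JS by (auto simp: S_def)
    have above: "\<delta> i = 0" if "J < i" "i \<le> h" for i
    proof (rule ccontr)
      assume "\<delta> i \<noteq> 0"
      then have "i \<in> S" using that J1 by (auto simp: S_def \<delta>_def)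
      then have "i \<le> J" unfolding J_def using Sne by simp
      then show False using that by simp
    qed
    have s1: "(\<Sum>i=1..h. \<delta> i *s rseq n m i) = (\<Sum>i=1..J. \<delta> i *s rseq n m i)"
      by (rule sum.mono_neutral_right) (use J1 above in auto)
    have s2: "(\<Sum>i=1..J. \<delta> i *s rseq n m i) = (\<Sum>i\<in>{1..<J}. \<delta> i *s rseq n m i) + \<delta> J *s rseq n m J"
    proof -
      have "{1..J} = insert J {1..<J}" using J1 by auto
      then show ?thesis by (simp add: add.commute)
    qed
    have "\<delta> J *s rseq n m J = - ((A - B) + (\<Sum>i\<in>{1..<J}. \<delta> i *s rseq n m i))"
      using eq0 unfolding s1 s2 by (simp add: algebra_simps eq_neg_iff_add_eq_0)
    also have "\<dots> \<in> Lspan n m (J - 1)"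
      by (intro L_neg Lspan.add ABL L_sum Lspan.smul) (auto intro: L_mono[OF r_in])
    finally have a1: "\<delta> J *s rseq n m J \<in> Lspan n m (J - 1)" .
    have a2: "\<delta> J *s (rseq n m J - m J) \<in> Lspan n m (J - 1)"
      by (intro Lspan.smul r_diff J1)
    have "\<delta> J *s m J = \<delta> J *s rseq n m J - \<delta> J *s (rseq n m J - m J)"
      by (simp add: vec_eq_iff algebra_simps)
    also have "\<dots> \<in> Lspan n m (J - 1)" by (intro L_diff a1 a2)
    finally have a3: "\<delta> J *s m J \<in> Lspan n m (J - 1)" .
    define K where "K = \<bar>\<delta> J\<bar>"
    have "K *s m J = sgn (\<delta> J) *s (\<delta> J *s m J)"
      by (simp add: K_def vec_eq_iff abs_sgn)
    then have a4: "K *s m J \<in> Lspan n m (J - 1)" using Lspan.smul[OF a3, of "sgn (\<delta> J)"] by metis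
    have Kpos: "0 < K" using J1 by (simp add: K_def \<delta>_def)
    have eJ: "int (\<alpha> J) < eseq n m J" "int (\<beta> J) < eseq n m J" using ebound J1 by auto
    have Klt: "K < eseq n m J" using eJ by (simp add: K_def \<delta>_def)
    have dv: "Dseq n m J dvd K * Dseq n m (Suc J)" by (rule Dlemma[OF J1(1) a4])
    have Dge: "0 \<le> Dseq n m (Suc J)" using J1 by (simp add: Dseq_def)
    have Dne: "Dseq n m (Suc J) \<noteq> 0"
    proof
      assume "Dseq n m (Suc J) = 0"
      then have "eseq n m J = 0" by (simp add: eseq_def)
      then show False using eJ by simp
    qed
    have "0 < K * Dseq n m (Suc J)" using Kpos Dge Dne by simp
    then have "Dseq n m J \<le> K * Dseq n m (Suc J)" using dv by (rule zdvd_imp_le[rotated])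
    then have "Dseq n m J div Dseq n m (Suc J) \<le> K * Dseq n m (Suc J) div Dseq n m (Suc J)"
      using Dge Dne by (intro zdiv_mono1) auto
    then have "eseq n m J \<le> K" using Dne by (simp add: eseq_def)
    then show False using Klt by simp
  qed
  have "(\<Sum>j=1..h. int (\<alpha> j) *s rseq n m j) = (\<Sum>j=1..h. int (\<beta> j) *s rseq n m j)"
    using allj by (intro sum.cong) auto
  then have AB: "A = B" using eq unfolding A_def B_def by simp
  have comp: "(\<Sum>k\<in>UNIV. \<gamma> $ k *s r0 n k) $ i = \<gamma> $ i * int n" for \<gamma> :: "int^'e" and i
  proof -
    have "(\<Sum>k\<in>UNIV. \<gamma> $ k *s r0 n k) $ i = (\<Sum>k\<in>UNIV. \<gamma> $ k * int n * (if i = k then 1 else 0))"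
      by (simp add: r0_def axis_def)
    also have "\<dots> = (\<Sum>k\<in>UNIV. (if k = i then \<gamma> $ i * int n else 0))"
      by (intro sum.cong) auto
    also have "\<dots> = \<gamma> $ i * int n" by simp
    finally show ?thesis .
  qed
  have "\<alpha>0 = \<beta>0"
  proof (rule vec_eq_iff[THEN iffD2, rule_format])
    fix i
    have "A $ i = B $ i" using AB by simp
    then have "\<alpha>0 $ i * int n = \<beta>0 $ i * int n" unfolding A_def B_def comp .
    then show "\<alpha>0 $ i = \<beta>0 $ i" using n0 by simp
  qed
  then show ?thesis using allj by simp
qed

end
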